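(* Assume Assumption 1 and that $\|f(x,w)\|\le K(\|x\|+\|w\|)$ for some $K>0$ and all $x,w$, and that $\int\|z\|^2\nu_w(dz)<\infty$ where $\nu_w$ is the law of $w_t$. Suppose $(\pi_n,Q_n)\to(\pi,Q)$ in $\mathcal S\times\mathcal Q_c$ and $\{\pi_n\}$ satisfies $\lim_{L\to\infty}\sup_n\int_{\{\|x\|^2\ge L\}}\|x\|^2\pi_n(dx)=0$. If $m$ is such that $\pi(Q^{-1}(m))>0$, then (for all $n$ large enough that $\pi_n(Q_n^{-1}(m))>0$) the sequence $\{\hat\pi(m,\pi_n,Q_n)\}$ satisfies the same uniform integrability condition: $$\lim_{L\to\infty}\sup_n\int_{\{\|z\|^2\ge L\}}\|z\|^2\,\hat\pi(m,\pi_n,Q_n)(dz)=0.$$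
   Context: Assumption 1: the source is $x_{t+1}=f(x_t,w_t)$ with $f:\mathbb R^d\times\mathbb R^d\to\mathbb R^d$ Borel, $\{w_t\}$ i.i.d. and independent of $x_0$; for each $x$ the law of $f(x,w_0)$ has a density $\phi(\cdot|x)$ which is strictly positive everywhere, bounded by $C$ and $C_1$-Lipschitz, uniformly in $x$. $\mathcal S$: probability measures on $\mathbb R^d$ with density bounded by $C$ and $C_1$-Lipschitz (weak topology). $\mathcal Q_c$: Borel maps $Q:\mathbb R^d\to\{1,\dots,M\}$ with all cells convex, topologized by: fix $P$ with strictly positive density, identify $Q,Q'$ if $PQ=PQ'$, and $Q_n\to Q$ iff $PQ_n\to PQ$ weakly, where $PQ(A\times\{i\})=P(A\cap Q^{-1}(i))$. For $\pi(Q^{-1}(m))>0$, $\hat\pi(m,\pi,Q)$ is the law of $f(x,w)$ where $x\sim\pi(\cdot\mid Q^{-1}(m))$ and $w\sim\nu_w$ independent, i.e. it has density $z\mapsto\pi(Q^{-1}(m))^{-1}\int_{Q^{-1}(m)}\phi(z|x)\pi(dx)$. *)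

theory Defs
  imports "HOL-Probability.Probability"
begin

definition weak_conv_to :: "(nat \<Rightarrow> 'a::topological_space measure) \<Rightarrow> 'a measure \<Rightarrow> bool" where
  "weak_conv_to Ms M \<longleftrightarrow>
     (\<forall>g::'a \<Rightarrow> real. continuous_on UNIV g \<and> bounded (range g) \<longrightarrow>
        (\<lambda>n. \<integral>x. g x \<partial>Ms n) \<longlonglongrightarrow> (\<integral>x. g x \<partial>M))"

definition S_class :: "real \<Rightarrow> real \<Rightarrow> 'a::euclidean_space measure set" where
  "S_class C C1 = {\<pi>. prob_space \<pi> \<and>
     (\<exists>g. g \<in> borel_measurable borel \<and> (\<forall>x. 0 \<le> g x \<and> g x \<le> C) \<and>
          C1-lipschitz_on UNIV g \<and> \<pi> = density lborel (\<lambda>x. ennreal (g x)))}"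

definition Qc_class :: "nat \<Rightarrow> ('a::euclidean_space \<Rightarrow> nat) set" where
  "Qc_class M = {Q. Q \<in> measurable borel (count_space UNIV) \<and> (\<forall>x. Q x \<in> {1..M}) \<and>
                    (\<forall>i. convex (Q -` {i}))}"

text \<open>The joint measure PQ on R^d x {1..M}: PQ(A x {i}) = P(A \<inter> Q^{-1}(i)).\<close>
definition joint_meas :: "'a::euclidean_space measure \<Rightarrow> ('a \<Rightarrow> nat) \<Rightarrow> ('a \<times> nat) measure" where
  "joint_meas P Q = distr P borel (\<lambda>x. (x, Q x))"

definition Qc_conv :: "'a::euclidean_space measure \<Rightarrow> (nat \<Rightarrow> 'a \<Rightarrow> nat) \<Rightarrow> ('a \<Rightarrow> nat) \<Rightarrow> bool" where
  "Qc_conv P Qs Q \<longleftrightarrow> weak_conv_to (\<lambda>n. joint_meas P (Qs n)) (joint_meas P Q)"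

text \<open>hat pi(m, pi, Q): law of f(x,w) with x ~ pi( . | Q^{-1}(m)) and w ~ nu independent.\<close>
definition pihat :: "('a::euclidean_space \<Rightarrow> 'a \<Rightarrow> 'a) \<Rightarrow> 'a measure \<Rightarrow> nat \<Rightarrow> 'a measure \<Rightarrow> ('a \<Rightarrow> nat) \<Rightarrow> 'a measure" where
  "pihat f \<nu> m \<pi> Q = distr (uniform_measure \<pi> (Q -` {m}) \<Otimes>\<^sub>M \<nu>) borel (\<lambda>(x, w). f x w)"

definition tail2 :: "'a::euclidean_space measure \<Rightarrow> real \<Rightarrow> ennreal" where
  "tail2 M L = (\<integral>\<^sup>+ z. indicator {z. L \<le> norm z ^ 2} z * ennreal (norm z ^ 2) \<partial>M)"

end

theory Submission
  imports Defs
begin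

lemma pw_bound:
  fixes K L s a b :: real
  assumes K: "K > 0" and a: "0 \<le> a" and b: "0 \<le> b" and s: "0 \<le> s" and sb: "s \<le> 2*K^2*(a+b)"
  shows "indicator {z. L \<le> z} s * s \<le>
     4*K^2 * (indicator {z. L/(4*K^2) \<le> z} a * a + indicator {z. L/(4*K^2) \<le> z} b * b)"
proof (cases "L \<le> s")
  case False
  have "0 \<le> indicator {z. L/(4*K^2) \<le> z} a * a + indicator {z. L/(4*K^2) \<le> z} b * b"
    using a b by (simp add: indicator_def)
  moreover have "indicator {z. L \<le> z} s * s = 0" using False by (simp add: indicator_def)
  moreover have "0 \<le> 4*K^2*(indicator {z. L/(4*K^2) \<le> z} a * a + indicator {z. L/(4*K^2) \<le> z} b * b)"
    using calculation(1) by simp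
  ultimately show ?thesis by linarith
next
  case True
  have K2: "K^2 > 0" using K by simp
  have ia: "0 \<le> indicator {z. L/(4*K^2) \<le> z} a * a" using a by (simp add: indicator_def)
  have ib: "0 \<le> indicator {z. L/(4*K^2) \<le> z} b * b" using b by (simp add: indicator_def)
  have ls: "indicator {z. L \<le> z} s * s = s" using True by (simp add: indicator_def)
  show ?thesis
  proof (cases "b \<le> a")
    case True
    have "2*K^2*(a+b) \<le> 2*K^2*(2*a)" using True K2 by (intro mult_left_mono) auto
    hence sa: "s \<le> 4*K^2*a" using sb by linarith
    hence "L/(4*K^2) \<le> a" using \<open>L \<le> s\<close> K2 by (simp add: field_simps)
    hence "indicator {z. L/(4*K^2) \<le> z} a * a = a" by (simp add: indicator_def)
    moreover have "4*K^2*a \<le> 4*K^2*(a + indicator {z. L/(4*K^2) \<le> z} b * b)"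
      using ib K2 by (intro mult_left_mono) auto
    ultimately show ?thesis using ls sa by (simp only:)
  next
    case False
    have "2*K^2*(a+b) \<le> 2*K^2*(2*b)" using False K2 by (intro mult_left_mono) auto
    hence sa: "s \<le> 4*K^2*b" using sb by linarith
    hence "L/(4*K^2) \<le> b" using \<open>L \<le> s\<close> K2 by (simp add: field_simps)
    hence "indicator {z. L/(4*K^2) \<le> z} b * b = b" by (simp add: indicator_def)
    moreover have "4*K^2*b \<le> 4*K^2*(indicator {z. L/(4*K^2) \<le> z} a * a + b)"
      using ia K2 by (intro mult_left_mono) auto
    ultimately show ?thesis using ls sa by (simp only:)
  qed
qed

lemma tail_bound:
  fixes f :: "'a::euclidean_space \<Rightarrow> 'a \<Rightarrow> 'a" and U \<nu> :: "'a measure"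
  assumes f_meas: "(\<lambda>(x, w). f x w) \<in> borel_measurable borel"
    and nu_prob: "prob_space \<nu>" and nu_sets: "sets \<nu> = sets borel"
    and U_prob: "prob_space U" and U_sets: "sets U = sets borel"
    and K: "K > 0" and growth: "\<And>x w. norm (f x w) \<le> K * (norm x + norm w)"
  shows "tail2 (distr (U \<Otimes>\<^sub>M \<nu>) borel (\<lambda>(x, w). f x w)) L
     \<le> ennreal (4*K^2) * (tail2 U (L/(4*K^2)) + tail2 \<nu> (L/(4*K^2)))"
proof -
  interpret nu: prob_space \<nu> by (rule nu_prob)
  interpret U: prob_space U by (rule U_prob)
  define L' where "L' = L/(4*K^2)"
  define a where "a = (\<lambda>x::'a. indicator {z. L' \<le> z} (norm x ^ 2) * norm x ^ 2 :: real)"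
  have fm: "(\<lambda>(x, w). f x w) \<in> borel_measurable (U \<Otimes>\<^sub>M \<nu>)"
  proof -
    have "U \<Otimes>\<^sub>M \<nu> \<rightarrow>\<^sub>M borel = (borel \<Otimes>\<^sub>M borel :: ('a\<times>'a) measure) \<rightarrow>\<^sub>M borel"
      by (rule measurable_cong_sets[OF sets_pair_measure_cong[OF U_sets nu_sets] refl])
    hence eq: "U \<Otimes>\<^sub>M \<nu> \<rightarrow>\<^sub>M borel = (borel :: ('a\<times>'a) measure) \<rightarrow>\<^sub>M borel" by (simp add: borel_prod)
    show ?thesis by (subst eq) (rule f_meas)
  qed
  have am: "a \<in> borel_measurable borel" unfolding a_def by measurable
  have aU: "a \<in> borel_measurable U" by (subst measurable_cong_sets[OF U_sets refl]) (rule am)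
  have an: "a \<in> borel_measurable \<nu>" by (subst measurable_cong_sets[OF nu_sets refl]) (rule am)
  have m1: "(\<lambda>z. ennreal (a (fst z))) \<in> borel_measurable (U \<Otimes>\<^sub>M \<nu>)"
    using aU by measurable
  have m2: "(\<lambda>z. ennreal (a (snd z))) \<in> borel_measurable (U \<Otimes>\<^sub>M \<nu>)"
    using an by measurable
  have eq1: "tail2 (distr (U \<Otimes>\<^sub>M \<nu>) borel (\<lambda>(x, w). f x w)) L =
     (\<integral>\<^sup>+ z. ennreal (indicator {t. L \<le> t} (norm (f (fst z) (snd z)) ^ 2) * norm (f (fst z) (snd z)) ^ 2) \<partial>(U \<Otimes>\<^sub>M \<nu>))"
    unfolding tail2_def
    apply (subst nn_integral_distr[OF fm])
     apply measurable
    apply (intro nn_integral_cong)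
    apply (auto simp: indicator_def split: prod.splits)
    done
  also have "\<dots> \<le> (\<integral>\<^sup>+ z. ennreal (4*K^2) * (ennreal (a (fst z)) + ennreal (a (snd z))) \<partial>(U \<Otimes>\<^sub>M \<nu>))"
  proof (intro nn_integral_mono)
    fix z :: "'a \<times> 'a"
    have n1: "norm (f (fst z) (snd z)) ^ 2 \<le> (K * (norm (fst z) + norm (snd z)))^2"
      using growth[of "fst z" "snd z"] by (intro power_mono) auto
    also have "\<dots> \<le> 2*K^2*(norm (fst z)^2 + norm (snd z)^2)"
    proof -
      define x where "x = norm (fst z)"
      define y where "y = norm (snd z)"
      have "0 \<le> (x-y)^2" by simp
      hence "(x+y)^2 \<le> 2*(x^2+y^2)" by (simp add: power2_diff power2_sum)
      hence "K^2*(x+y)^2 \<le> K^2*(2*(x^2+y^2))" by (intro mult_left_mono) auto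
      moreover have "(K*(x+y))^2 = K^2*(x+y)^2" by (simp add: power_mult_distrib)
      moreover have "K^2*(2*(x^2+y^2)) = 2*K^2*(x^2+y^2)" by simp
      ultimately show ?thesis unfolding x_def[symmetric] y_def[symmetric] by metis
    qed
    finally have "indicator {t. L \<le> t} (norm (f (fst z) (snd z)) ^ 2) * norm (f (fst z) (snd z)) ^ 2
        \<le> 4*K^2*(a (fst z) + a (snd z))"
      unfolding a_def L'_def by (intro pw_bound K) auto
    thus "ennreal (indicator {t. L \<le> t} (norm (f (fst z) (snd z)) ^ 2) * norm (f (fst z) (snd z)) ^ 2)
       \<le> ennreal (4*K^2) * (ennreal (a (fst z)) + ennreal (a (snd z)))"
      unfolding a_def by (simp add: ennreal_mult[symmetric] ennreal_plus[symmetric] del: ennreal_plus)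
  qed
  also have "\<dots> = ennreal (4*K^2) * ((\<integral>\<^sup>+ z. ennreal (a (fst z)) \<partial>(U \<Otimes>\<^sub>M \<nu>)) + (\<integral>\<^sup>+ z. ennreal (a (snd z)) \<partial>(U \<Otimes>\<^sub>M \<nu>)))"
  proof -
    show ?thesis using m1 m2 by (simp add: nn_integral_cmult nn_integral_add)
  qed
  also have "(\<integral>\<^sup>+ z. ennreal (a (fst z)) \<partial>(U \<Otimes>\<^sub>M \<nu>)) = tail2 U L'"
  proof -
    have "(\<integral>\<^sup>+ z. ennreal (a (fst z)) \<partial>(U \<Otimes>\<^sub>M \<nu>)) = (\<integral>\<^sup>+ x. \<integral>\<^sup>+ y. ennreal (a (fst (x,y))) \<partial>\<nu> \<partial>U)"
      using m1 by (subst nu.nn_integral_fst[symmetric]) auto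
    also have "\<dots> = (\<integral>\<^sup>+ x. ennreal (a x) \<partial>U)" by (simp add: nu.emeasure_space_1)
    also have "\<dots> = tail2 U L'" unfolding tail2_def a_def
      by (intro nn_integral_cong) (auto simp: indicator_def)
    finally show ?thesis .
  qed
  also have "(\<integral>\<^sup>+ z. ennreal (a (snd z)) \<partial>(U \<Otimes>\<^sub>M \<nu>)) = tail2 \<nu> L'"
  proof -
    have "(\<integral>\<^sup>+ z. ennreal (a (snd z)) \<partial>(U \<Otimes>\<^sub>M \<nu>)) = (\<integral>\<^sup>+ x. \<integral>\<^sup>+ y. ennreal (a (snd (x,y))) \<partial>\<nu> \<partial>U)"
      using m2 by (subst nu.nn_integral_fst[symmetric]) auto
    also have "\<dots> = (\<integral>\<^sup>+ y. ennreal (a y) \<partial>\<nu>)" by (simp add: U.emeasure_space_1)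
    also have "\<dots> = tail2 \<nu> L'" unfolding tail2_def a_def
      by (intro nn_integral_cong) (auto simp: indicator_def)
    finally show ?thesis .
  qed
  finally show ?thesis unfolding L'_def .
qed

lemma tail_uniform:
  fixes M :: "'a::euclidean_space measure"
  assumes Mp: "prob_space M" and Ms: "sets M = sets borel" and A: "A \<in> sets borel"
    and c: "0 < c" "c \<le> measure M A"
  shows "tail2 (uniform_measure M A) L \<le> ennreal (1/c) * tail2 M L"
proof -
  have Fm: "(\<lambda>z::'a. indicator {z. L \<le> norm z ^ 2} z * ennreal (norm z ^ 2)) \<in> borel_measurable M"
    by (subst measurable_cong_sets[OF Ms refl]) measurable
  have AM: "A \<in> sets M" using A Ms by simp
  have "tail2 (uniform_measure M A) L = (\<integral>\<^sup>+ z. indicator {z. L \<le> norm z ^ 2} z * ennreal (norm z ^ 2) * indicator A z \<partial>M) / emeasure M A"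
    unfolding tail2_def by (rule nn_integral_uniform_measure[OF Fm AM])
  also have "\<dots> \<le> tail2 M L / emeasure M A"
    unfolding tail2_def
    by (intro divide_right_mono_ennreal nn_integral_mono) (auto simp: indicator_def)
  also have "\<dots> = tail2 M L * ennreal (1 / measure M A)"
  proof -
    interpret prob_space M by (rule Mp)
    have "emeasure M A = ennreal (measure M A)" by (simp add: emeasure_eq_measure)
    moreover have "0 < measure M A" using c by linarith
    ultimately show ?thesis by (simp add: divide_ennreal_def inverse_ennreal inverse_eq_divide)
  qed
  also have "\<dots> \<le> tail2 M L * ennreal (1/c)"
    using c by (intro mult_left_mono ennreal_leI) (auto simp: field_simps)
  also have "\<dots> = ennreal (1/c) * tail2 M L" by (simp add: mult.commute)
  finally show ?thesis .
qed

lemma tail_nu: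
  fixes \<nu> :: "'a::euclidean_space measure"
  assumes nu_sets: "sets \<nu> = sets borel"
    and mom: "(\<integral>\<^sup>+ z. ennreal (norm z ^ 2) \<partial>\<nu>) < \<infinity>"
  shows "((\<lambda>L. tail2 \<nu> L) \<longlongrightarrow> 0) at_top"
proof -
  have wm: "(\<lambda>z::'a. norm z ^ 2) \<in> borel_measurable \<nu>"
    by (subst measurable_cong_sets[OF nu_sets refl]) measurable
  have w: "integrable \<nu> (\<lambda>z. norm z ^ 2)"
    using wm mom by (intro integrableI_bounded) auto
  define s where "s = (\<lambda>(L::real) (z::'a). indicator {z. L \<le> norm z ^ 2} z * norm z ^ 2 :: real)"
  have sm: "\<And>L. s L \<in> borel_measurable \<nu>"
    unfolding s_def by (subst measurable_cong_sets[OF nu_sets refl]) measurable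
  have lim: "((\<lambda>L. integral\<^sup>L \<nu> (s L)) \<longlongrightarrow> integral\<^sup>L \<nu> (\<lambda>_. 0::real)) at_top"
  proof (rule integral_dominated_convergence_at_top[where w="\<lambda>z. norm z ^ 2"])
    show "(\<lambda>_. 0::real) \<in> borel_measurable \<nu>" by simp
    show "\<And>t. s t \<in> borel_measurable \<nu>" by (rule sm)
    show "integrable \<nu> (\<lambda>z. norm z ^ 2)" by (rule w)
    show "AE x in \<nu>. ((\<lambda>i. s i x) \<longlongrightarrow> 0) at_top"
    proof (intro AE_I2)
      fix x :: 'a
      have "eventually (\<lambda>i. s i x = 0) at_top"
        using eventually_gt_at_top[of "norm x ^ 2"] by eventually_elim (auto simp: s_def)
      thus "((\<lambda>i. s i x) \<longlongrightarrow> 0) at_top" by (rule tendsto_eventually)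
    qed
    show "\<forall>\<^sub>F i in at_top. AE x in \<nu>. norm (s i x) \<le> norm x ^ 2"
      by (intro always_eventually allI AE_I2) (auto simp: s_def indicator_def)
  qed
  have eq: "tail2 \<nu> L = ennreal (integral\<^sup>L \<nu> (s L))" for L
  proof -
    have "integrable \<nu> (s L)"
    proof -
      have "{z::'a. L \<le> norm z ^ 2} \<in> sets borel"
        by (rule borel_closed, intro closed_Collect_le continuous_intros)
      hence "{z::'a. L \<le> norm z ^ 2} \<in> sets \<nu>" using nu_sets by simp
      from integrable_mult_indicator[OF this w] show ?thesis unfolding s_def by simp
    qed
    hence "(\<integral>\<^sup>+ z. ennreal (s L z) \<partial>\<nu>) = ennreal (integral\<^sup>L \<nu> (s L))"
      by (intro nn_integral_eq_integral) (auto simp: s_def)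
    moreover have "tail2 \<nu> L = (\<integral>\<^sup>+ z. ennreal (s L z) \<partial>\<nu>)"
      unfolding tail2_def s_def by (intro nn_integral_cong) (auto simp: indicator_def)
    ultimately show ?thesis by simp
  qed
  show ?thesis unfolding eq using tendsto_ennrealI[OF lim] by simp
qed

lemma pos_region:
  fixes g :: "'a::euclidean_space \<Rightarrow> real" and A :: "'a set"
  assumes gm[measurable]: "g \<in> borel_measurable borel" and g0: "\<And>x. 0 \<le> g x"
    and glip: "C1-lipschitz_on UNIV g"
    and A[measurable]: "A \<in> sets borel"
    and pos: "(\<integral>\<^sup>+ x. ennreal (g x) * indicator A x \<partial>lborel) \<noteq> 0"
  shows "\<exists>\<delta> c \<rho>. 0 < \<delta> \<and> 0 < \<rho> \<and> 2*C1*\<rho> \<le> \<delta>/4 \<and> (\<forall>z\<in>ball c \<rho>. 3*\<delta>/4 \<le> g z)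
     \<and> emeasure lborel (A \<inter> ball c \<rho>) \<noteq> 0"
proof -
  have C1: "0 \<le> C1" using glip by (rule lipschitz_on_nonneg)
  define E where "E = (\<lambda>k::nat. A \<inter> {x. 1/(real k + 1) < g x} \<inter> cball 0 (real k))"
  have Em[measurable]: "E k \<in> sets borel" for k unfolding E_def by measurable
  have "\<exists>k. emeasure lborel (E k) \<noteq> 0"
  proof (rule ccontr)
    assume "\<not> ?thesis"
    hence "\<And>k. E k \<in> null_sets lborel" by (auto simp: null_sets_def)
    hence "(\<Union>k. E k) \<in> null_sets lborel" by (intro null_sets_UN) auto
    hence "AE x in lborel. x \<notin> (\<Union>k. E k)"
      by (subst AE_iff_null_sets[symmetric]) auto
    hence "AE x in lborel. ennreal (g x) * indicator A x = 0"
    proof eventually_elim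
      fix x assume nx: "x \<notin> (\<Union>k. E k)"
      show "ennreal (g x) * indicator A x = 0"
      proof (rule ccontr)
        assume "ennreal (g x) * indicator A x \<noteq> 0"
        hence xA: "x \<in> A" and gx: "0 < g x" using g0[of x] by (auto simp: indicator_def)
        obtain n1 :: nat where n1: "norm x < real n1" using reals_Archimedean2 by blast
        obtain n2 :: nat where n2: "1 / g x < real n2" using reals_Archimedean2 by blast
        define k where "k = max n1 n2"
        have "norm x \<le> real k" using n1 by (simp add: k_def)
        moreover have "1/(real k + 1) < g x"
        proof -
          have "1 / g x < real k + 1" using n2 by (simp add: k_def)
          thus ?thesis using gx by (simp add: field_simps)
        qed
        ultimately have "x \<in> E k" using xA by (simp add: E_def)
        thus False using nx by blast
      qed
    qed
    hence "(\<integral>\<^sup>+ x. ennreal (g x) * indicator A x \<partial>lborel) = 0"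
      by (simp add: nn_integral_0_iff_AE)
    thus False using pos by simp
  qed
  then obtain k where k: "emeasure lborel (E k) \<noteq> 0" by blast
  define \<delta> where "\<delta> = 1/(real k + 1)"
  define \<rho> where "\<rho> = \<delta> / (8*(C1+1))"
  have \<delta>: "0 < \<delta>" unfolding \<delta>_def by simp
  have \<rho>: "0 < \<rho>" unfolding \<rho>_def using \<delta> C1 by simp
  have \<rho>C: "2*C1*\<rho> \<le> \<delta>/4"
  proof -
    have "2*C1*\<rho> = \<delta>/4 * (C1/(C1+1))" unfolding \<rho>_def using C1 by (simp add: field_simps)
    also have "\<dots> \<le> \<delta>/4 * 1" using C1 \<delta> by (intro mult_left_mono) auto
    finally show ?thesis by simp
  qed
  have cover: "cball (0::'a) (real k) \<subseteq> (\<Union>x\<in>cball 0 (real k). ball x \<rho>)"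
  proof
    fix x assume "x \<in> cball (0::'a) (real k)"
    thus "x \<in> (\<Union>x\<in>cball 0 (real k). ball x \<rho>)" using \<rho> by (intro UN_I[of x]) auto
  qed
  have opn: "\<And>x. x \<in> cball (0::'a) (real k) \<Longrightarrow> open (ball x \<rho>)" by simp
  obtain D :: "'a set" where D: "D \<subseteq> cball 0 (real k)" "finite D" "cball 0 (real k) \<subseteq> (\<Union>x\<in>D. ball x \<rho>)"
    by (rule compactE_image[OF compact_cball opn cover]) iprover
  have "\<exists>c\<in>D. emeasure lborel (E k \<inter> ball c \<rho>) \<noteq> 0"
  proof (rule ccontr)
    assume "\<not> ?thesis"
    hence "\<And>c. c \<in> D \<Longrightarrow> E k \<inter> ball c \<rho> \<in> null_sets lborel" by (auto simp: null_sets_def)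
    hence "(\<Union>c\<in>D. E k \<inter> ball c \<rho>) \<in> null_sets lborel"
      using D(2) by (intro null_sets_UN') (auto intro: countable_finite)
    moreover have "E k = (\<Union>c\<in>D. E k \<inter> ball c \<rho>)" using D(3) unfolding E_def by auto
    ultimately have "E k \<in> null_sets lborel" by simp
    thus False using k by auto
  qed
  then obtain c where cD: "c \<in> D" and cpos: "emeasure lborel (E k \<inter> ball c \<rho>) \<noteq> 0" by blast
  have "E k \<inter> ball c \<rho> \<noteq> {}" using cpos by auto
  then obtain y where y: "y \<in> E k \<inter> ball c \<rho>" by blast
  have gy: "\<delta> < g y" using y by (simp add: E_def \<delta>_def)
  have gB: "3*\<delta>/4 \<le> g z" if z: "z \<in> ball c \<rho>" for z
  proof -
    have "dist z y \<le> dist z c + dist c y" by (rule dist_triangle)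
    also have "\<dots> < 2*\<rho>" using z y by (auto simp: dist_commute)
    finally have dzy: "dist z y \<le> 2*\<rho>" by simp
    have "dist (g z) (g y) \<le> C1 * dist z y" using glip by (rule lipschitz_onD) auto
    also have "\<dots> \<le> C1 * (2*\<rho>)" using dzy C1 by (intro mult_left_mono) auto
    finally have "\<bar>g z - g y\<bar> \<le> \<delta>/4" using \<rho>C by (simp add: dist_real_def)
    thus ?thesis using gy by linarith
  qed
  have "emeasure lborel (E k \<inter> ball c \<rho>) \<le> emeasure lborel (A \<inter> ball c \<rho>)"
    by (intro emeasure_mono) (auto simp: E_def)
  hence "emeasure lborel (A \<inter> ball c \<rho>) \<noteq> 0" using cpos by (metis le_zero_eq)
  thus ?thesis using \<delta> \<rho> \<rho>C gB by blast
qed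

lemma dens_int:
  fixes u h :: "'a::euclidean_space \<Rightarrow> real"
  assumes um[measurable]: "u \<in> borel_measurable borel" and u0: "\<And>x. 0 \<le> u x"
    and pr: "prob_space (density lborel (\<lambda>x. ennreal (u x)))"
    and hm[measurable]: "h \<in> borel_measurable borel" and h0: "\<And>x. 0 \<le> h x" and hb: "\<And>x. h x \<le> B"
  shows "(\<integral>x. h x \<partial>density lborel (\<lambda>x. ennreal (u x))) = enn2real (\<integral>\<^sup>+ x. ennreal (u x) * ennreal (h x) \<partial>lborel)"
    and "(\<integral>\<^sup>+ x. ennreal (u x) * ennreal (h x) \<partial>lborel) \<le> ennreal B"
proof -
  interpret prob_space "density lborel (\<lambda>x. ennreal (u x))" by (rule pr)
  have e: "(\<integral>\<^sup>+ x. ennreal (h x) \<partial>density lborel (\<lambda>x. ennreal (u x))) = (\<integral>\<^sup>+ x. ennreal (u x) * ennreal (h x) \<partial>lborel)"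
    by (subst nn_integral_density) auto
  show "(\<integral>x. h x \<partial>density lborel (\<lambda>x. ennreal (u x))) = enn2real (\<integral>\<^sup>+ x. ennreal (u x) * ennreal (h x) \<partial>lborel)"
    using h0 by (subst integral_eq_nn_integral) (auto simp: e)
  have "(\<integral>\<^sup>+ x. ennreal (h x) \<partial>density lborel (\<lambda>x. ennreal (u x))) \<le> (\<integral>\<^sup>+ x. ennreal B \<partial>density lborel (\<lambda>x. ennreal (u x)))"
    using hb by (intro nn_integral_mono ennreal_leI) auto
  also have "\<dots> = ennreal B"
  proof -
    have "emeasure (density lborel (\<lambda>x. ennreal (u x))) UNIV = 1"
      using emeasure_space_1 by simp
    thus ?thesis by simp
  qed
  finally show "(\<integral>\<^sup>+ x. ennreal (u x) * ennreal (h x) \<partial>lborel) \<le> ennreal B" using e by simp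
qed

lemma dens_lower:
  fixes gs :: "nat \<Rightarrow> 'a::euclidean_space \<Rightarrow> real" and g :: "'a \<Rightarrow> real"
  assumes gsm[measurable]: "\<And>n. gs n \<in> borel_measurable borel" and gs0: "\<And>n x. 0 \<le> gs n x"
    and gslip: "\<And>n. C1-lipschitz_on UNIV (gs n)"
    and gsp: "\<And>n. prob_space (density lborel (\<lambda>x. ennreal (gs n x)))"
    and gm[measurable]: "g \<in> borel_measurable borel" and g0: "\<And>x. 0 \<le> g x"
    and gp: "prob_space (density lborel (\<lambda>x. ennreal (g x)))"
    and conv: "weak_conv_to (\<lambda>n. density lborel (\<lambda>x. ennreal (gs n x))) (density lborel (\<lambda>x. ennreal (g x)))"
    and \<rho>: "0 < \<rho>" and \<delta>: "0 < \<delta>" and \<rho>C: "2*C1*\<rho> \<le> \<delta>/4"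
    and gB: "\<And>z. z \<in> ball c \<rho> \<Longrightarrow> 3*\<delta>/4 \<le> g z"
  shows "eventually (\<lambda>n. \<forall>y\<in>ball c \<rho>. \<delta>/4 \<le> gs n y) sequentially"
proof -
  have C1: "0 \<le> C1" using gslip[of 0] by (rule lipschitz_on_nonneg)
  define h where "h = (\<lambda>z::'a. max 0 (\<rho> - dist z c))"
  have hc: "continuous_on UNIV h" unfolding h_def by (intro continuous_intros)
  have hm[measurable]: "h \<in> borel_measurable borel" by (rule borel_measurable_continuous_onI[OF hc])
  have h0: "\<And>z. 0 \<le> h z" and hb: "\<And>z. h z \<le> \<rho>" unfolding h_def using \<rho> by auto
  have hout: "h z = 0" if "z \<notin> ball c \<rho>" for z using that unfolding h_def by (auto simp: dist_commute)
  have hbdd: "bounded (range h)"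
    using h0 hb by (intro boundedI[of _ \<rho>]) auto
  define Jh where "Jh = (\<integral>\<^sup>+ z. ennreal (h z) \<partial>lborel)"
  have Jfin: "Jh < \<infinity>"
  proof -
    have "Jh \<le> (\<integral>\<^sup>+ z. ennreal \<rho> * indicator (ball c \<rho>) z \<partial>lborel)"
      unfolding Jh_def using hb hout by (intro nn_integral_mono) (auto simp: indicator_def intro!: ennreal_leI)
    also have "\<dots> = ennreal \<rho> * emeasure lborel (ball c \<rho>)" by (rule nn_integral_cmult_indicator) simp
    also have "\<dots> < \<infinity>" using emeasure_lborel_ball_finite[of c \<rho>] by (simp add: ennreal_mult_less_top)
    finally show ?thesis .
  qed
  have Jpos: "0 < Jh"
  proof -
    have "0 < ennreal (\<rho>/2) * emeasure lborel (ball c (\<rho>/2))"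
    proof -
      have "0 < measure lborel (ball c (\<rho>/2))" using \<rho> by (intro content_ball_pos) auto
      hence "0 < emeasure lborel (ball c (\<rho>/2))"
      proof -
        have "emeasure lborel (ball c (\<rho>/2)) = ennreal (measure lborel (ball c (\<rho>/2)))"
          using emeasure_lborel_ball_finite[of c "\<rho>/2"] by (intro emeasure_eq_ennreal_measure) auto
        thus ?thesis using \<open>0 < measure lborel (ball c (\<rho>/2))\<close> by simp
      qed
      thus ?thesis using \<rho> by (simp add: ennreal_zero_less_mult_iff)
    qed
    also have "\<dots> = (\<integral>\<^sup>+ z. ennreal (\<rho>/2) * indicator (ball c (\<rho>/2)) z \<partial>lborel)"
      by (rule nn_integral_cmult_indicator[symmetric]) simp
    also have "\<dots> \<le> Jh" unfolding Jh_def
      by (intro nn_integral_mono) (auto simp: indicator_def h_def dist_commute intro!: ennreal_leI)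
    finally show ?thesis .
  qed
  define J where "J = enn2real Jh"
  have J: "0 < J" unfolding J_def using Jfin Jpos by (simp add: enn2real_positive_iff)
  have JhJ: "Jh = ennreal J" unfolding J_def using Jfin by simp
  define I where "I = (\<lambda>u::'a\<Rightarrow>real. \<integral>x. h x \<partial>density lborel (\<lambda>x. ennreal (u x)))"
  have lim: "(\<lambda>n. I (gs n)) \<longlonglongrightarrow> I g"
    using conv hc hbdd unfolding weak_conv_to_def I_def by blast
  have Ig: "3*\<delta>/4 * J \<le> I g"
  proof -
    have "ennreal (3*\<delta>/4) * Jh \<le> (\<integral>\<^sup>+ x. ennreal (g x) * ennreal (h x) \<partial>lborel)"
      unfolding Jh_def
      apply (subst nn_integral_cmult[symmetric], simp)
      apply (intro nn_integral_mono)
      subgoal for x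
        using gB[of x] hout[of x]
        by (cases "x \<in> ball c \<rho>") (auto intro!: ennreal_leI mult_right_mono)
      done
    moreover have "(\<integral>\<^sup>+ x. ennreal (g x) * ennreal (h x) \<partial>lborel) \<le> ennreal \<rho>"
      using dens_int(2)[OF gm g0 gp hm h0 hb] .
    ultimately have "enn2real (ennreal (3*\<delta>/4) * Jh) \<le> enn2real (\<integral>\<^sup>+ x. ennreal (g x) * ennreal (h x) \<partial>lborel)"
      by (intro enn2real_mono) (auto simp: top_unique intro: order.strict_trans1)
    thus ?thesis using dens_int(1)[OF gm g0 gp hm h0 hb] \<delta> J unfolding I_def JhJ
      by (simp add: ennreal_mult[symmetric])
  qed
  have Ign: "I (gs n) \<le> \<delta>/2 * J" if y: "y \<in> ball c \<rho>" "gs n y < \<delta>/4" for n y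
  proof -
    have gsB: "gs n z \<le> \<delta>/2" if z: "z \<in> ball c \<rho>" for z
    proof -
      have "dist z y \<le> dist z c + dist c y" by (rule dist_triangle)
      also have "\<dots> < 2*\<rho>" using z y by (auto simp: dist_commute)
      finally have dzy: "dist z y \<le> 2*\<rho>" by simp
      have "dist (gs n z) (gs n y) \<le> C1 * dist z y" using gslip by (rule lipschitz_onD) auto
      also have "\<dots> \<le> C1 * (2*\<rho>)" using dzy C1 by (intro mult_left_mono) auto
      finally have "\<bar>gs n z - gs n y\<bar> \<le> \<delta>/4" using \<rho>C by (simp add: dist_real_def)
      thus ?thesis using y by linarith
    qed
    have "(\<integral>\<^sup>+ x. ennreal (gs n x) * ennreal (h x) \<partial>lborel) \<le> ennreal (\<delta>/2) * Jh"
      unfolding Jh_def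
      apply (subst nn_integral_cmult[symmetric], simp)
      apply (intro nn_integral_mono)
      subgoal for x
        using gsB[of x] hout[of x]
        by (cases "x \<in> ball c \<rho>") (auto intro!: ennreal_leI mult_right_mono)
      done
    hence "enn2real (\<integral>\<^sup>+ x. ennreal (gs n x) * ennreal (h x) \<partial>lborel) \<le> enn2real (ennreal (\<delta>/2) * Jh)"
      using Jfin by (intro enn2real_mono) (auto simp: ennreal_mult_less_top)
    thus ?thesis using dens_int(1)[OF gsm gs0 gsp hm h0 hb] \<delta> J unfolding I_def JhJ
      by (simp add: ennreal_mult[symmetric])
  qed
  have "eventually (\<lambda>n. I g - \<delta>/4 * J < I (gs n)) sequentially"
    using lim \<delta> J by (intro order_tendstoD(1)) auto
  thus ?thesis
  proof eventually_elim
    case (elim n)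
    show ?case
    proof (rule ccontr)
      assume "\<not> (\<forall>y\<in>ball c \<rho>. \<delta>/4 \<le> gs n y)"
      then obtain y where "y \<in> ball c \<rho>" "gs n y < \<delta>/4" by auto
      from Ign[OF this] elim Ig show False by (simp add: algebra_simps)
    qed
  qed
qed

lemma pw_real:
  fixes p h i j \<rho> T :: real
  assumes "0 \<le> p" "0 \<le> h" "h \<le> \<rho>" "i \<in> {0,1}" "j \<in> {0,1}" "h \<noteq> 0 \<Longrightarrow> i = 1 \<Longrightarrow> j = 1"
     "0 \<le> T"
  shows "p * (h * i) \<le> \<rho> * (p * (if T - 1 < p then 1 else 0) + T * j)"
proof (cases "h = 0 \<or> i = 0")
  case True
  have "0 \<le> \<rho> * (p * (if T - 1 < p then 1 else 0) + T * j)"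
    using assms by (intro mult_nonneg_nonneg add_nonneg_nonneg) auto
  thus ?thesis using True by auto
next
  case False
  hence i: "i = 1" and j: "j = 1" using assms by auto
  show ?thesis
  proof (cases "T - 1 < p")
    case True
    have "p * h \<le> p * \<rho>" using assms by (intro mult_left_mono) auto
    moreover have "0 \<le> \<rho> * T" using assms by auto
    ultimately show ?thesis using True i j by (simp add: algebra_simps)
  next
    case False
    have "p * h \<le> T * h" using assms False by (intro mult_right_mono) auto
    also have "\<dots> \<le> T * \<rho>" using assms by (intro mult_left_mono) auto
    finally show ?thesis using False i j by (simp add: algebra_simps)
  qed
qed

lemma cell_leb:
  fixes p :: "'a::euclidean_space \<Rightarrow> real" and P :: "'a measure"
    and Qs :: "nat \<Rightarrow> 'a \<Rightarrow> nat" and Q :: "'a \<Rightarrow> nat"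
  assumes P_prob: "prob_space P" and p_meas[measurable]: "p \<in> borel_measurable borel"
    and p_pos: "\<And>x. 0 < p x" and P_dens: "P = density lborel (\<lambda>x. ennreal (p x))"
    and Qsm: "\<And>n. Qs n \<in> measurable borel (count_space UNIV)"
    and Qm: "Q \<in> measurable borel (count_space UNIV)"
    and Q_conv: "Qc_conv P Qs Q"
    and \<rho>: "0 < \<rho>"
    and Apos: "emeasure lborel (Q -` {m} \<inter> ball c \<rho>) \<noteq> 0"
  shows "\<exists>\<eta>>0. eventually (\<lambda>n. ennreal \<eta> \<le> emeasure lborel (Qs n -` {m} \<inter> ball c \<rho>)) sequentially"
proof -
  have p0: "\<And>x. 0 \<le> p x" using p_pos less_imp_le by blast
  have Pp: "prob_space (density lborel (\<lambda>x. ennreal (p x)))" using P_prob P_dens by simp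
  have Psets: "sets P = sets borel" using P_dens by simp
  define h where "h = (\<lambda>z::'a. max 0 (\<rho> - dist z c))"
  have hc: "continuous_on UNIV h" unfolding h_def by (intro continuous_intros)
  have hm[measurable]: "h \<in> borel_measurable borel" by (rule borel_measurable_continuous_onI[OF hc])
  have h0: "\<And>z. 0 \<le> h z" and hb: "\<And>z. h z \<le> \<rho>" unfolding h_def using \<rho> by auto
  have hout: "h z = 0" if "z \<notin> ball c \<rho>" for z using that unfolding h_def by (auto simp: dist_commute)
  have hin: "0 < h z" if "z \<in> ball c \<rho>" for z using that unfolding h_def by (auto simp: dist_commute)
  define G where "G = (\<lambda>z::'a \<times> nat. h (fst z) * (if snd z = m then 1 else 0 :: real))"
  have kc: "continuous_on UNIV (\<lambda>i::nat. if i = m then 1 else 0 :: real)" by simp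
  have Gc: "continuous_on UNIV G" unfolding G_def
    by (intro continuous_on_mult continuous_on_compose2[OF hc continuous_on_fst[OF continuous_on_id]]
        continuous_on_compose2[OF kc continuous_on_snd[OF continuous_on_id]]) auto
  have Gb: "bounded (range G)"
    using h0 hb \<rho> by (intro boundedI[of _ \<rho>]) (auto simp: G_def)
  have Gm: "G \<in> borel_measurable borel" by (rule borel_measurable_continuous_onI[OF Gc])
  have natb: "sets (borel :: nat measure) = sets (count_space UNIV)" by (rule sets_borel_eq_count_space)
  have Aset: "\<And>R::'a\<Rightarrow>nat. R \<in> measurable borel (count_space UNIV) \<Longrightarrow> R -` {m} \<in> sets borel"
  proof -
    fix R :: "'a \<Rightarrow> nat" assume "R \<in> measurable borel (count_space UNIV)"
    from measurable_sets[OF this, of "{m}"] show "R -` {m} \<in> sets borel" by simp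
  qed
  have hiM: "(\<lambda>x. h x * indicator (R -` {m}) x) \<in> borel_measurable borel"
    if R: "R \<in> measurable borel (count_space UNIV)" for R :: "'a \<Rightarrow> nat"
    using Aset[OF R] by (intro borel_measurable_times hm borel_measurable_indicator)
  have intG: "(\<integral>z. G z \<partial>joint_meas P R) = enn2real (\<integral>\<^sup>+ x. ennreal (p x) * ennreal (h x * indicator (R -` {m}) x) \<partial>lborel)"
    if R: "R \<in> measurable borel (count_space UNIV)" for R :: "'a \<Rightarrow> nat"
  proof -
    have Rb: "R \<in> measurable borel borel"
      by (subst measurable_cong_sets[OF refl natb]) (rule R)
    have pm: "(\<lambda>x. (x, R x)) \<in> measurable P borel"
    proof -
      have "(\<lambda>x. (x, R x)) \<in> measurable borel (borel \<Otimes>\<^sub>M borel)"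
        using Rb by measurable
      hence "(\<lambda>x. (x, R x)) \<in> measurable borel borel" by (simp add: borel_prod)
      thus ?thesis by (subst measurable_cong_sets[OF Psets refl])
    qed
    have "(\<integral>z. G z \<partial>joint_meas P R) = (\<integral>x. G (x, R x) \<partial>P)"
      unfolding joint_meas_def by (rule integral_distr[OF pm Gm])
    also have "\<dots> = (\<integral>x. h x * indicator (R -` {m}) x \<partial>density lborel (\<lambda>x. ennreal (p x)))"
      unfolding P_dens G_def by (intro Bochner_Integration.integral_cong) (auto simp: indicator_def)
    also have "\<dots> = enn2real (\<integral>\<^sup>+ x. ennreal (p x) * ennreal (h x * indicator (R -` {m}) x) \<partial>lborel)"
      by (rule dens_int(1)[OF p_meas p0 Pp hiM[OF R], where B=\<rho>]) (use h0 hb \<rho> in \<open>auto simp: indicator_def\<close>)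
    finally show ?thesis .
  qed
  have Vbd: "(\<integral>\<^sup>+ x. ennreal (p x) * ennreal (h x * indicator (R -` {m}) x) \<partial>lborel) \<le> ennreal \<rho>"
    if R: "R \<in> measurable borel (count_space UNIV)" for R :: "'a \<Rightarrow> nat"
    by (rule dens_int(2)[OF p_meas p0 Pp hiM[OF R]]) (use h0 hb \<rho> in \<open>auto simp: indicator_def\<close>)
  define V where "V = (\<lambda>R::'a\<Rightarrow>nat. \<integral>\<^sup>+ x. ennreal (p x) * ennreal (h x * indicator (R -` {m}) x) \<partial>lborel)"
  have lim: "(\<lambda>n. enn2real (V (Qs n))) \<longlonglongrightarrow> enn2real (V Q)"
  proof -
    have "(\<lambda>n. \<integral>z. G z \<partial>joint_meas P (Qs n)) \<longlonglongrightarrow> (\<integral>z. G z \<partial>joint_meas P Q)"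
      using Q_conv Gc Gb unfolding Qc_conv_def weak_conv_to_def by blast
    thus ?thesis using intG[OF Qsm] intG[OF Qm] unfolding V_def by simp
  qed
  have VQpos: "V Q \<noteq> 0"
  proof
    assume "V Q = 0"
    hence "AE x in lborel. ennreal (p x) * ennreal (h x * indicator (Q -` {m}) x) = 0"
      unfolding V_def using Aset[OF Qm] by (subst nn_integral_0_iff_AE[symmetric]) auto
    hence "AE x in lborel. x \<notin> Q -` {m} \<inter> ball c \<rho>"
    proof eventually_elim
      case (elim x)
      show ?case
      proof
        assume x: "x \<in> Q -` {m} \<inter> ball c \<rho>"
        have "Q x = m" "0 < h x" "0 < p x" using x hin[of x] p_pos[of x] by auto
        thus False using elim by (simp add: indicator_def)
      qed
    qed
    hence "Q -` {m} \<inter> ball c \<rho> \<in> null_sets lborel"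
      using Aset[OF Qm] by (subst AE_iff_null_sets) auto
    thus False using Apos by auto
  qed
  define v where "v = enn2real (V Q)"
  have VQfin: "V Q \<le> ennreal \<rho>" unfolding V_def by (rule Vbd[OF Qm])
  have v: "0 < v"
  proof -
    have "V Q < top" using VQfin by (rule order.strict_trans1) simp
    moreover have "0 < V Q" using VQpos by (metis not_gr_zero)
    ultimately show ?thesis unfolding v_def by (simp add: enn2real_positive_iff)
  qed
  interpret Pr: prob_space P by (rule P_prob)
  define S where "S = (\<lambda>k::nat. {x. real k < p x})"
  have Ss: "S k \<in> sets P" for k unfolding S_def Psets by measurable
  have "(INF k. emeasure P (S k)) = emeasure P (\<Inter>k. S k)"
    using Ss by (intro INF_emeasure_decseq) (auto simp: decseq_def S_def)
  also have "(\<Inter>k. S k) = {}"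
  proof -
    have "x \<notin> (\<Inter>k. S k)" for x
    proof -
      obtain k :: nat where "p x < real k" using reals_Archimedean2 by blast
      hence "x \<notin> S k" by (simp add: S_def)
      thus ?thesis by blast
    qed
    thus ?thesis by blast
  qed
  finally have "(INF k. emeasure P (S k)) < ennreal (v/(4*\<rho>))" using v \<rho> by simp
  then obtain k where k: "emeasure P (S k) < ennreal (v/(4*\<rho>))" by (auto simp: INF_less_iff)
  define T where "T = real k + 1"
  have T: "0 < T" unfolding T_def by simp
  have PSk: "emeasure P (S k) = (\<integral>\<^sup>+ x. ennreal (p x * (if T - 1 < p x then 1 else 0)) \<partial>lborel)"
    unfolding P_dens using Ss[of k]
    by (subst emeasure_density) (auto simp: Psets S_def T_def indicator_def intro!: nn_integral_cong)
  define \<eta> where "\<eta> = v / (4*\<rho>*T)"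
  have \<eta>: "0 < \<eta>" unfolding \<eta>_def using v \<rho> T by simp
  have "eventually (\<lambda>n. v/2 < enn2real (V (Qs n))) sequentially"
    using lim v unfolding v_def by (intro order_tendstoD(1)) auto
  hence "eventually (\<lambda>n. ennreal \<eta> \<le> emeasure lborel (Qs n -` {m} \<inter> ball c \<rho>)) sequentially"
  proof eventually_elim
    case (elim n)
    define B where "B = Qs n -` {m} \<inter> ball c \<rho>"
    have Bs: "B \<in> sets borel" unfolding B_def using Aset[OF Qsm] by auto
    have eB: "emeasure lborel B = ennreal (measure lborel B)"
      using emeasure_mono[of B "ball c \<rho>" lborel] emeasure_lborel_ball_finite[of c \<rho>]
      by (intro emeasure_eq_ennreal_measure) (auto simp: B_def top_unique)
    have ePS: "emeasure P (S k) = ennreal (measure P (S k))" by (simp add: Pr.emeasure_eq_measure)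
    have "V (Qs n) \<le> (\<integral>\<^sup>+ x. ennreal \<rho> * (ennreal (p x * (if T - 1 < p x then 1 else 0)) + ennreal T * indicator B x) \<partial>lborel)"
      unfolding V_def
    proof (intro nn_integral_mono)
      fix x
      have "p x * (h x * indicator (Qs n -` {m}) x) \<le> \<rho> * (p x * (if T - 1 < p x then 1 else 0) + T * indicator B x)"
        using hout[of x] by (intro pw_real p0 h0 hb) (auto simp: indicator_def B_def T_def)
      hence le: "ennreal (p x * (h x * indicator (Qs n -` {m}) x)) \<le> ennreal (\<rho> * (p x * (if T - 1 < p x then 1 else 0) + T * indicator B x))"
        by (rule ennreal_leI)
      thus "ennreal (p x) * ennreal (h x * indicator (Qs n -` {m}) x) \<le> ennreal \<rho> * (ennreal (p x * (if T - 1 < p x then 1 else 0)) + ennreal T * indicator B x)"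
      proof -
        have e1: "ennreal (p x) * ennreal (h x * indicator (Qs n -` {m}) x) = ennreal (p x * (h x * indicator (Qs n -` {m}) x))"
          using p0[of x] h0[of x] by (simp add: ennreal_mult)
        have e2: "ennreal \<rho> * (ennreal (p x * (if T - 1 < p x then 1 else 0)) + ennreal T * indicator B x) = ennreal (\<rho> * (p x * (if T - 1 < p x then 1 else 0) + T * indicator B x))"
          using p0[of x] \<rho> T
          by (cases "x \<in> B"; cases "T - 1 < p x") (simp_all add: ennreal_mult[symmetric] ennreal_plus[symmetric] del: ennreal_plus)
        show ?thesis unfolding e1 e2 by (rule le)
      qed
    qed
    also have "\<dots> = ennreal \<rho> * (emeasure P (S k) + ennreal T * emeasure lborel B)"
      using Bs by (simp add: nn_integral_cmult nn_integral_add PSk nn_integral_cmult_indicator)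
    also have "\<dots> = ennreal (\<rho> * (measure P (S k) + T * measure lborel B))"
      using \<rho> T by (simp add: eB ePS ennreal_mult[symmetric] ennreal_plus[symmetric] del: ennreal_plus)
    finally have Vle: "V (Qs n) \<le> ennreal (\<rho> * (measure P (S k) + T * measure lborel B))" .
    have "v/2 < enn2real (V (Qs n))" by (rule elim)
    also have "\<dots> \<le> \<rho> * (measure P (S k) + T * measure lborel B)"
    proof -
      have "0 \<le> \<rho> * (measure P (S k) + T * measure lborel B)"
        using \<rho> T by (intro mult_nonneg_nonneg add_nonneg_nonneg) auto
      moreover have "enn2real (V (Qs n)) \<le> enn2real (ennreal (\<rho> * (measure P (S k) + T * measure lborel B)))"
        by (rule enn2real_mono[OF Vle]) simp
      ultimately show ?thesis by simp
    qed
    finally have A1: "v/2 < \<rho> * measure P (S k) + \<rho> * T * measure lborel B" by (simp add: algebra_simps)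
    have "measure P (S k) < v/(4*\<rho>)" using k ePS v \<rho> by (simp add: ennreal_less_iff)
    hence "\<rho> * measure P (S k) < v/4" using \<rho> by (simp add: field_simps)
    hence "v/4 < \<rho> * T * measure lborel B" using A1 by linarith
    hence "\<eta> \<le> measure lborel B" unfolding \<eta>_def using \<rho> T by (simp add: field_simps)
    thus ?case unfolding B_def[symmetric] eB by (simp add: ennreal_leI)
  qed
  thus ?thesis using \<eta> by blast
qed

lemma cell_lower:
  fixes C C1 :: real and M m :: nat
    and P :: "'a::euclidean_space measure" and p :: "'a \<Rightarrow> real"
    and \<pi>s :: "nat \<Rightarrow> 'a measure" and \<pi> :: "'a measure"
    and Qs :: "nat \<Rightarrow> 'a \<Rightarrow> nat" and Q :: "'a \<Rightarrow> nat"
  assumes P_prob: "prob_space P" and p_meas: "p \<in> borel_measurable borel"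
    and p_pos: "\<And>x. 0 < p x" and P_dens: "P = density lborel (\<lambda>x. ennreal (p x))"
    and pis_S: "\<And>n. \<pi>s n \<in> S_class C C1" and pi_S: "\<pi> \<in> S_class C C1"
    and Qs_Qc: "\<And>n. Qs n \<in> Qc_class M" and Q_Qc: "Q \<in> Qc_class M"
    and pi_conv: "weak_conv_to \<pi>s \<pi>"
    and Q_conv: "Qc_conv P Qs Q"
    and cell_pos: "0 < measure \<pi> (Q -` {m})"
  shows "\<exists>N c. 0 < c \<and> (\<forall>n\<ge>N. c \<le> measure (\<pi>s n) (Qs n -` {m}))"
proof -
  obtain g where gm[measurable]: "g \<in> borel_measurable borel" and g0: "\<And>x. 0 \<le> g x"
    and glip: "C1-lipschitz_on UNIV g" and pig: "\<pi> = density lborel (\<lambda>x. ennreal (g x))"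
    and pip: "prob_space \<pi>"
    using pi_S unfolding S_class_def by auto
  have "\<forall>n. \<exists>g. g \<in> borel_measurable borel \<and> (\<forall>x. 0 \<le> g x) \<and> C1-lipschitz_on UNIV g
      \<and> \<pi>s n = density lborel (\<lambda>x. ennreal (g x)) \<and> prob_space (\<pi>s n)"
    using pis_S unfolding S_class_def by blast
  then obtain gs where gs: "\<And>n. gs n \<in> borel_measurable borel \<and> (\<forall>x. 0 \<le> gs n x) \<and> C1-lipschitz_on UNIV (gs n)
      \<and> \<pi>s n = density lborel (\<lambda>x. ennreal (gs n x)) \<and> prob_space (\<pi>s n)"
    by metis
  have gsm: "\<And>n. gs n \<in> borel_measurable borel" and gs0: "\<And>n x. 0 \<le> gs n x"
    and gslip: "\<And>n. C1-lipschitz_on UNIV (gs n)"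
    and pisg: "\<And>n. \<pi>s n = density lborel (\<lambda>x. ennreal (gs n x))" using gs by auto
  have pisp: "\<And>n. prob_space (\<pi>s n)" using gs by blast
  have Qsm: "\<And>n. Qs n \<in> measurable borel (count_space UNIV)" using Qs_Qc unfolding Qc_class_def by auto
  have Qm: "Q \<in> measurable borel (count_space UNIV)" using Q_Qc unfolding Qc_class_def by auto
  have Aset: "\<And>R::'a\<Rightarrow>nat. R \<in> measurable borel (count_space UNIV) \<Longrightarrow> R -` {m} \<in> sets borel"
  proof -
    fix R :: "'a \<Rightarrow> nat" assume "R \<in> measurable borel (count_space UNIV)"
    from measurable_sets[OF this, of "{m}"] show "R -` {m} \<in> sets borel" by simp
  qed
  have "(\<integral>\<^sup>+ x. ennreal (g x) * indicator (Q -` {m}) x \<partial>lborel) \<noteq> 0"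
  proof
    assume z: "(\<integral>\<^sup>+ x. ennreal (g x) * indicator (Q -` {m}) x \<partial>lborel) = 0"
    have "emeasure \<pi> (Q -` {m}) = 0" unfolding pig using Aset[OF Qm] z
      by (subst emeasure_density) auto
    hence "measure \<pi> (Q -` {m}) = 0" by (simp add: measure_def)
    thus False using cell_pos by simp
  qed
  from pos_region[OF gm g0 glip Aset[OF Qm] this]
  obtain \<delta> c \<rho> where \<delta>: "0 < \<delta>" and \<rho>: "0 < \<rho>" and \<rho>C: "2*C1*\<rho> \<le> \<delta>/4"
    and gB: "\<forall>z\<in>ball c \<rho>. 3*\<delta>/4 \<le> g z" and Apos: "emeasure lborel (Q -` {m} \<inter> ball c \<rho>) \<noteq> 0"
    by blast
  have conv: "weak_conv_to (\<lambda>n. density lborel (\<lambda>x. ennreal (gs n x))) (density lborel (\<lambda>x. ennreal (g x)))"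
    using pi_conv unfolding pisg[symmetric] pig[symmetric] by (simp add: fun_eq_iff)
  have ev1: "eventually (\<lambda>n. \<forall>y\<in>ball c \<rho>. \<delta>/4 \<le> gs n y) sequentially"
    using gB pisp pip unfolding pisg pig
    by (intro dens_lower[OF gsm gs0 gslip _ gm g0 _ conv \<rho> \<delta> \<rho>C]) auto
  obtain \<eta> where \<eta>: "0 < \<eta>" and ev2: "eventually (\<lambda>n. ennreal \<eta> \<le> emeasure lborel (Qs n -` {m} \<inter> ball c \<rho>)) sequentially"
    using cell_leb[OF P_prob p_meas p_pos P_dens Qsm Qm Q_conv \<rho> Apos] by blast
  have "eventually (\<lambda>n. \<delta>/4*\<eta> \<le> measure (\<pi>s n) (Qs n -` {m})) sequentially"
    using ev1 ev2
  proof eventually_elim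
    case (elim n)
    interpret pn: prob_space "\<pi>s n" by (rule pisp)
    have "ennreal (\<delta>/4*\<eta>) = ennreal (\<delta>/4) * ennreal \<eta>" using \<delta> \<eta> by (subst ennreal_mult[symmetric]) auto
    also have "\<dots> \<le> ennreal (\<delta>/4) * emeasure lborel (Qs n -` {m} \<inter> ball c \<rho>)"
      using elim(2) by (intro mult_left_mono) auto
    also have "\<dots> = (\<integral>\<^sup>+ x. ennreal (\<delta>/4) * indicator (Qs n -` {m} \<inter> ball c \<rho>) x \<partial>lborel)"
      using Aset[OF Qsm[of n]] by (intro nn_integral_cmult_indicator[symmetric]) auto
    also have "\<dots> \<le> (\<integral>\<^sup>+ x. ennreal (gs n x) * indicator (Qs n -` {m}) x \<partial>lborel)"
      using elim(1) by (intro nn_integral_mono) (auto simp: indicator_def intro!: ennreal_leI)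
    also have "\<dots> = emeasure (\<pi>s n) (Qs n -` {m})"
      unfolding pisg using Aset[OF Qsm[of n]] gsm[of n]
      by (subst emeasure_density) auto
    also have "\<dots> = ennreal (measure (\<pi>s n) (Qs n -` {m}))" by (simp add: pn.emeasure_eq_measure)
    finally show ?case by (simp add: ennreal_le_iff)
  qed
  then obtain N where "\<And>n. n \<ge> N \<Longrightarrow> \<delta>/4*\<eta> \<le> measure (\<pi>s n) (Qs n -` {m})"
    by (auto simp: eventually_sequentially)
  moreover have "0 < \<delta>/4*\<eta>" using \<delta> \<eta> by simp
  ultimately show ?thesis by blast
qed

theorem lemma9:
  fixes f :: "'a::euclidean_space \<Rightarrow> 'a \<Rightarrow> 'a"
    and \<nu> :: "'a measure"
    and \<phi> :: "'a \<Rightarrow> 'a \<Rightarrow> real"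
    and C C1 K :: real
    and M m :: nat
    and P :: "'a measure" and p :: "'a \<Rightarrow> real"
    and \<pi>s :: "nat \<Rightarrow> 'a measure" and \<pi> :: "'a measure"
    and Qs :: "nat \<Rightarrow> 'a \<Rightarrow> nat" and Q :: "'a \<Rightarrow> nat"
  assumes f_meas: "(\<lambda>(x, w). f x w) \<in> borel_measurable borel"
    and nu_prob: "prob_space \<nu>" and nu_sets: "sets \<nu> = sets borel"
    and phi_meas: "\<And>x. \<phi> x \<in> borel_measurable borel"
    and phi_density: "\<And>x. distr \<nu> borel (f x) = density lborel (\<lambda>z. ennreal (\<phi> x z))"
    and phi_pos: "\<And>x z. 0 < \<phi> x z"
    and phi_bdd: "\<And>x z. \<phi> x z \<le> C"
    and phi_lip: "\<And>x. C1-lipschitz_on UNIV (\<phi> x)"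
    and growth: "K > 0" "\<And>x w. norm (f x w) \<le> K * (norm x + norm w)"
    and nu_moment: "(\<integral>\<^sup>+ z. ennreal (norm z ^ 2) \<partial>\<nu>) < \<infinity>"
    and P_prob: "prob_space P" and p_meas: "p \<in> borel_measurable borel"
    and p_pos: "\<And>x. 0 < p x" and P_dens: "P = density lborel (\<lambda>x. ennreal (p x))"
    and pis_S: "\<And>n. \<pi>s n \<in> S_class C C1" and pi_S: "\<pi> \<in> S_class C C1"
    and Qs_Qc: "\<And>n. Qs n \<in> Qc_class M" and Q_Qc: "Q \<in> Qc_class M"
    and pi_conv: "weak_conv_to \<pi>s \<pi>"
    and Q_conv: "Qc_conv P Qs Q"
    and UI: "((\<lambda>L. SUP n. tail2 (\<pi>s n) L) \<longlongrightarrow> 0) at_top"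
    and cell_pos: "0 < measure \<pi> (Q -` {m})"
  shows "(\<exists>N. \<forall>n\<ge>N. 0 < measure (\<pi>s n) (Qs n -` {m})) \<and>
         ((\<lambda>L. SUP n \<in> {n. 0 < measure (\<pi>s n) (Qs n -` {m})}. tail2 (pihat f \<nu> m (\<pi>s n) (Qs n)) L)
            \<longlongrightarrow> 0) at_top"
proof -
  obtain N c where c: "0 < c" and cN: "\<And>n. n \<ge> N \<Longrightarrow> c \<le> measure (\<pi>s n) (Qs n -` {m})"
    using cell_lower[OF P_prob p_meas p_pos P_dens pis_S pi_S Qs_Qc Q_Qc pi_conv Q_conv cell_pos] by blast
  define F where "F = {n. 0 < measure (\<pi>s n) (Qs n -` {m})}"
  define c' where "c' = Min (insert c ((\<lambda>n. measure (\<pi>s n) (Qs n -` {m})) ` {n\<in>F. n < N}))"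
  have fin: "finite (insert c ((\<lambda>n. measure (\<pi>s n) (Qs n -` {m})) ` {n\<in>F. n < N}))" by simp
  have c'pos: "0 < c'" unfolding c'_def using fin c by (subst Min_gr_iff) (auto simp: F_def)
  have c'le: "c' \<le> measure (\<pi>s n) (Qs n -` {m})" if "n \<in> F" for n
  proof (cases "n < N")
    case True thus ?thesis unfolding c'_def using that fin by (intro Min_le) auto
  next
    case False
    have "c' \<le> c" unfolding c'_def using fin by (intro Min_le) auto
    thus ?thesis using cN[of n] False by linarith
  qed
  have pis: "prob_space (\<pi>s n) \<and> sets (\<pi>s n) = sets borel" for n
    using pis_S[of n] unfolding S_class_def by auto
  have An: "Qs n -` {m} \<in> sets borel" for n
  proof -
    have "Qs n \<in> measurable borel (count_space UNIV)" using Qs_Qc[of n] unfolding Qc_class_def by auto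
    from measurable_sets[OF this, of "{m}"] show ?thesis by simp
  qed
  define d where "d = (\<lambda>L::real. L / (4*K^2))"
  define S where "S = (\<lambda>L. SUP n. tail2 (\<pi>s n) L)"
  define T where "T = (\<lambda>L. tail2 \<nu> L)"
  have bound: "tail2 (pihat f \<nu> m (\<pi>s n) (Qs n)) L \<le> ennreal (4*K^2) * (ennreal (1/c') * S (d L) + T (d L))"
    if n: "n \<in> F" for n L
  proof -
    interpret pn: prob_space "\<pi>s n" using pis by auto
    have U: "prob_space (uniform_measure (\<pi>s n) (Qs n -` {m}))"
      using n by (intro prob_space_uniform_measure) (auto simp: F_def pn.emeasure_eq_measure)
    have Us: "sets (uniform_measure (\<pi>s n) (Qs n -` {m})) = sets borel" using pis by simp
    have "tail2 (pihat f \<nu> m (\<pi>s n) (Qs n)) L \<le> ennreal (4*K^2) *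
       (tail2 (uniform_measure (\<pi>s n) (Qs n -` {m})) (d L) + tail2 \<nu> (d L))"
      unfolding pihat_def d_def by (rule tail_bound[OF f_meas nu_prob nu_sets U Us growth])
    also have "\<dots> \<le> ennreal (4*K^2) * (ennreal (1/c') * S (d L) + T (d L))"
    proof (intro mult_left_mono add_mono order_refl)
      have "tail2 (uniform_measure (\<pi>s n) (Qs n -` {m})) (d L) \<le> ennreal (1/c') * tail2 (\<pi>s n) (d L)"
        using pis An c'pos c'le[OF n] by (intro tail_uniform) auto
      also have "\<dots> \<le> ennreal (1/c') * S (d L)"
        unfolding S_def by (intro mult_left_mono SUP_upper) auto
      finally show "tail2 (uniform_measure (\<pi>s n) (Qs n -` {m})) (d L) \<le> ennreal (1/c') * S (d L)" .
      show "tail2 \<nu> (d L) \<le> T (d L)" by (simp add: T_def)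
    qed auto
    finally show ?thesis .
  qed
  have dlim: "filterlim d at_top at_top"
  proof -
    have "LIM x at_top. (1/(4*K^2)) * x :> at_top"
      using growth(1) by (intro filterlim_tendsto_pos_mult_at_top[OF tendsto_const] filterlim_ident) auto
    thus ?thesis unfolding d_def by (simp add: field_simps)
  qed
  have Slim: "((\<lambda>L. S (d L)) \<longlongrightarrow> 0) at_top"
    using filterlim_compose[OF UI[folded S_def] dlim] .
  have Tlim: "((\<lambda>L. T (d L)) \<longlongrightarrow> 0) at_top"
    using filterlim_compose[OF tail_nu[OF nu_sets nu_moment, folded T_def] dlim] .
  have Blim: "((\<lambda>L. ennreal (4*K^2) * (ennreal (1/c') * S (d L) + T (d L))) \<longlongrightarrow> 0) at_top"
  proof -
    have "((\<lambda>L. ennreal (4*K^2) * (ennreal (1/c') * S (d L) + T (d L))) \<longlongrightarrow>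
            ennreal (4*K^2) * (ennreal (1/c') * 0 + 0)) at_top"
      by (intro ennreal_tendsto_cmult tendsto_add Slim Tlim) auto
    thus ?thesis by simp
  qed
  have part2: "((\<lambda>L. SUP n \<in> F. tail2 (pihat f \<nu> m (\<pi>s n) (Qs n)) L) \<longlongrightarrow> 0) at_top"
  proof (rule tendsto_sandwich[OF _ _ tendsto_const Blim])
    show "\<forall>\<^sub>F L in at_top. 0 \<le> (SUP n \<in> F. tail2 (pihat f \<nu> m (\<pi>s n) (Qs n)) L)" by simp
    show "\<forall>\<^sub>F L in at_top. (SUP n \<in> F. tail2 (pihat f \<nu> m (\<pi>s n) (Qs n)) L)
        \<le> ennreal (4*K^2) * (ennreal (1/c') * S (d L) + T (d L))"
      by (intro always_eventually allI SUP_least bound)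
  qed
  have part1: "\<exists>N. \<forall>n\<ge>N. 0 < measure (\<pi>s n) (Qs n -` {m})"
    using c cN by (intro exI[of _ N]) (auto intro: less_le_trans)
  show ?thesis using part1 part2 unfolding F_def by blast
qed

end
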